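(* Let $l,t,s,n$ be integers with $t\geq l$, $s\geq l+1\geq 3$ and $n\geq 2\binom{3s}{2}$. Then for every integer $x$ with $1\leq x\leq l-1$, $$ex(n,\{K_{l,t},M_{s+1}\},l-1)\geq ex(n,\{K_{l,t},M_{s+1}\},x).$$
   Context: All graphs are finite and simple. $K_{l,t}$ is the complete bipartite graph with parts of sizes $l,t$; $M_{s+1}$ is the matching of $s+1$ disjoint edges; a graph is $\{K_{l,t},M_{s+1}\}$-free if it contains neither as a subgraph. For a graph $G$ with matching number at most $s$, say $X\subseteq V(G)$ is admissible if $|X|+\sum_{i=1}^m\lfloor |V(C_i)|/2\rfloor\leq s$, where $C_1,\dots,C_m$ are the components of $G-X$ (such $X$ exists by the Tutte–Berge formula); let $x(G)$ be the maximum size of an admissible set. Let $\mathscr{G}_x$ be the set of $\{K_{l,t},M_{s+1}\}$-free graphs $G$ on $n$ vertices with $x(G)=x$, and $ex(n,\{K_{l,t},M_{s+1}\},x)=\max_{G\in\mathscr{G}_x}e(G)$. *)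

theory Defs
  imports Main
begin

definition is_graph :: "nat \<Rightarrow> nat set set \<Rightarrow> bool" where
  "is_graph n G \<longleftrightarrow> (\<forall>e\<in>G. e \<subseteq> {0..<n} \<and> card e = 2)"

definition num_edges :: "nat set set \<Rightarrow> nat" where
  "num_edges G = card G"

definition contains_Klt :: "nat \<Rightarrow> nat \<Rightarrow> nat \<Rightarrow> nat set set \<Rightarrow> bool" where
  "contains_Klt n l t G \<longleftrightarrow>
     (\<exists>A B. A \<subseteq> {0..<n} \<and> B \<subseteq> {0..<n} \<and> A \<inter> B = {} \<and>
            card A = l \<and> card B = t \<and> (\<forall>a\<in>A. \<forall>b\<in>B. {a, b} \<in> G))"

definition contains_matching :: "nat \<Rightarrow> nat set set \<Rightarrow> bool" where
  "contains_matching k G \<longleftrightarrow>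
     (\<exists>M. M \<subseteq> G \<and> card M = k \<and> (\<forall>e\<in>M. \<forall>f\<in>M. e \<noteq> f \<longrightarrow> e \<inter> f = {}))"

definition del_rel :: "nat \<Rightarrow> nat set set \<Rightarrow> nat set \<Rightarrow> (nat \<times> nat) set" where
  "del_rel n G X = {(u, v). u \<in> {0..<n} - X \<and> v \<in> {0..<n} - X \<and> {u, v} \<in> G}"

definition components :: "nat \<Rightarrow> nat set set \<Rightarrow> nat set \<Rightarrow> nat set set" where
  "components n G X =
     {{w \<in> {0..<n} - X. (v, w) \<in> (del_rel n G X)\<^sup>*} | v. v \<in> {0..<n} - X}"

definition admissible :: "nat \<Rightarrow> nat \<Rightarrow> nat set set \<Rightarrow> nat set \<Rightarrow> bool" where
  "admissible n s G X \<longleftrightarrow> X \<subseteq> {0..<n} \<and>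
     card X + (\<Sum>C\<in>components n G X. card C div 2) \<le> s"

definition xG :: "nat \<Rightarrow> nat \<Rightarrow> nat set set \<Rightarrow> nat" where
  "xG n s G = Max {card X | X. admissible n s G X}"

definition GG :: "nat \<Rightarrow> nat \<Rightarrow> nat \<Rightarrow> nat \<Rightarrow> nat \<Rightarrow> nat set set set" where
  "GG n l t s x = {G. is_graph n G \<and> \<not> contains_Klt n l t G \<and>
                     \<not> contains_matching (Suc s) G \<and> xG n s G = x}"

text \<open>ex(n,{K_{l,t},M_{s+1}},x): maximum number of edges over \<G>_x
  (Sup on nat; equals 0 if the family is empty).\<close>
definition ex_x :: "nat \<Rightarrow> nat \<Rightarrow> nat \<Rightarrow> nat \<Rightarrow> nat \<Rightarrow> nat" where
  "ex_x n l t s x = Sup (num_edges ` GG n l t s x)"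

end

theory Submission
  imports Defs
begin


definition RR :: "nat set \<Rightarrow> nat set set \<Rightarrow> (nat \<times> nat) set" where
  "RR W G = {(u, v). u \<in> W \<and> v \<in> W \<and> {u, v} \<in> G}"

definition cls :: "nat set \<Rightarrow> nat set set \<Rightarrow> nat \<Rightarrow> nat set" where
  "cls W G v = {w \<in> W. (v, w) \<in> (RR W G)\<^sup>*}"

definition comps :: "nat set \<Rightarrow> nat set set \<Rightarrow> nat set set" where
  "comps W G = cls W G ` W"

definition matchin :: "nat set \<Rightarrow> nat set set \<Rightarrow> nat set set \<Rightarrow> bool" where
  "matchin W G M \<longleftrightarrow> M \<subseteq> G \<and> (\<forall>e\<in>M. e \<subseteq> W) \<and> (\<forall>e\<in>M. \<forall>f\<in>M. e \<noteq> f \<longrightarrow> e \<inter> f = {})"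

lemma components_eq: "components n G X = comps ({0..<n} - X) G"
  unfolding components_def comps_def cls_def del_rel_def RR_def by auto

lemma RR_sym: "(u, v) \<in> RR W G \<Longrightarrow> (v, u) \<in> RR W G"
  by (auto simp: RR_def insert_commute)

lemma RRs_sym: "(u, v) \<in> (RR W G)\<^sup>* \<Longrightarrow> (v, u) \<in> (RR W G)\<^sup>*"
proof (induction rule: rtrancl_induct)
  case base then show ?case by simp
next
  case (step y z) then show ?case by (meson RR_sym converse_rtrancl_into_rtrancl)
qed

lemma cls_eq: "x \<in> cls W G v \<Longrightarrow> cls W G x = cls W G v"
  unfolding cls_def by (auto intro: rtrancl_trans dest: RRs_sym)

lemma comp_cls: "C \<in> comps W G \<Longrightarrow> x \<in> C \<Longrightarrow> C = cls W G x"
  unfolding comps_def using cls_eq by blast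

lemma self_cls: "v \<in> W \<Longrightarrow> v \<in> cls W G v"
  unfolding cls_def by auto

lemma edge_cls: "u \<in> W \<Longrightarrow> w \<in> W \<Longrightarrow> {u, w} \<in> G \<Longrightarrow> w \<in> cls W G u"
  unfolding cls_def RR_def by auto

lemma cls_sub: "cls W G v \<subseteq> W"
  unfolding cls_def by auto

lemma comps_fin: "finite W \<Longrightarrow> finite (comps W G)"
  unfolding comps_def by simp

lemma comps_sub: "C \<in> comps W G \<Longrightarrow> C \<subseteq> W"
  unfolding comps_def using cls_sub by blast

lemma comps_disj: "C1 \<in> comps W G \<Longrightarrow> C2 \<in> comps W G \<Longrightarrow> x \<in> C1 \<Longrightarrow> x \<in> C2 \<Longrightarrow> C1 = C2"
  using comp_cls by metis

lemma cls_in: "v \<in> W \<Longrightarrow> cls W G v \<in> comps W G"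
  unfolding comps_def by simp

lemma union_card:
  assumes "finite M" "\<forall>e\<in>M. card e = 2" "\<forall>e\<in>M. \<forall>f\<in>M. e \<noteq> f \<longrightarrow> e \<inter> f = {}"
  shows "card (\<Union>M) = 2 * card M"
proof -
  have "card (\<Union>M) = sum card M"
    by (rule card_Union_disjoint) (use assms in \<open>auto simp: pairwise_def disjnt_def intro: card_ge_0_finite\<close>)
  also have "\<dots> = sum (\<lambda>_. 2) M" using assms(2) by (intro sum.cong) auto
  finally show ?thesis by simp
qed

lemma edge_in_comp:
  assumes "e \<in> G" "card e = 2" "e \<subseteq> W"
  obtains C where "C \<in> comps W G" "e \<subseteq> C"
proof -
  obtain u w where e: "e = {u, w}" using assms(2) card_2_iff by metis
  have "u \<in> W" "w \<in> W" using assms e by auto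
  then have "e \<subseteq> cls W G u" using e assms(1) self_cls edge_cls by auto
  then show ?thesis using that cls_in \<open>u \<in> W\<close> by blast
qed

lemma match_comp_bound:
  assumes "finite W" "\<forall>e\<in>G. card e = 2" "matchin W G M" and that: "C \<in> comps W G"
  shows "card {e\<in>M. e \<subseteq> C} \<le> card C div 2"
proof -
  let ?MC = "{e\<in>M. e \<subseteq> C}"
  have fC: "finite C" using comps_sub[OF that] assms(1) finite_subset by blast
  have fM: "finite ?MC"
    by (rule finite_subset[of _ "Pow C"]) (use fC in auto)
  have "card (\<Union>?MC) = 2 * card ?MC"
    by (rule union_card) (use fM assms(2,3) in \<open>auto simp: matchin_def\<close>)
  moreover have "card (\<Union>?MC) \<le> card C" by (rule card_mono) (use fC in auto)
  ultimately show ?thesis by simp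
qed

lemma match_le_sum:
  assumes "finite W" "\<forall>e\<in>G. card e = 2" "matchin W G M"
  shows "card M \<le> (\<Sum>C\<in>comps W G. card C div 2)"
proof -
  have "M \<subseteq> (\<Union>C\<in>comps W G. {e\<in>M. e \<subseteq> C})"
  proof
    fix e assume "e \<in> M"
    then have "e \<in> G" "e \<subseteq> W" using assms(3) unfolding matchin_def by auto
    then obtain C where "C \<in> comps W G" "e \<subseteq> C" using edge_in_comp assms(2) by metis
    then show "e \<in> (\<Union>C\<in>comps W G. {e\<in>M. e \<subseteq> C})" using \<open>e \<in> M\<close> by auto
  qed
  moreover have "finite M"
    by (rule finite_subset[of _ "Pow W"]) (use assms(1,3) in \<open>auto simp: matchin_def\<close>)
  ultimately have "card M \<le> card (\<Union>C\<in>comps W G. {e\<in>M. e \<subseteq> C})"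
    by (intro card_mono) (auto intro: finite_subset)
  also have "\<dots> \<le> (\<Sum>C\<in>comps W G. card {e\<in>M. e \<subseteq> C})"
    by (rule card_UN_le) (simp add: comps_fin assms(1))
  also have "\<dots> \<le> (\<Sum>C\<in>comps W G. card C div 2)"
    by (rule sum_mono) (rule match_comp_bound[OF assms])
  finally show ?thesis .
qed



lemma match_fin: "finite W \<Longrightarrow> matchin W G M \<Longrightarrow> finite M"
  by (rule finite_subset[of _ "Pow W"]) (auto simp: matchin_def)

lemma match_mono: "matchin W' G N \<Longrightarrow> W' \<subseteq> W \<Longrightarrow> matchin W G N"
  unfolding matchin_def by blast

lemma match_insert:
  "matchin W G M \<Longrightarrow> e \<in> G \<Longrightarrow> e \<subseteq> W \<Longrightarrow> e \<inter> \<Union>M = {} \<Longrightarrow> matchin W G (insert e M)"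
  unfolding matchin_def by blast

lemma match_insert_card:
  assumes "finite W" "matchin W G M" "e \<in> G" "e \<subseteq> W" "e \<inter> \<Union>M = {}" "e \<noteq> {}"
  shows "matchin W G (insert e M) \<and> card (insert e M) = Suc (card M)"
proof -
  have "e \<notin> M" using assms(5,6) by blast
  then show ?thesis using match_insert[OF assms(2-5)] match_fin[OF assms(1,2)] by simp
qed

lemma gallai:
  assumes fin: "finite W" and c2: "\<forall>e\<in>G. card e = 2"
    and maxm: "\<forall>M. matchin W G M \<longrightarrow> card M \<le> \<nu>"
    and B: "\<forall>v\<in>W. \<exists>M. matchin (W - {v}) G M \<and> card M = \<nu>"
  shows "\<forall>M u v. matchin W G M \<and> card M = \<nu> \<and> u \<in> W \<and> v \<in> W \<and> u \<notin> \<Union>M \<and> v \<notin> \<Union>M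
          \<and> u \<noteq> v \<and> (u, v) \<in> RR W G ^^ m \<longrightarrow> False"
proof (induction m rule: less_induct)
  case (less m)
  show ?case
  proof (intro allI impI)
    fix M u v
    assume H: "matchin W G M \<and> card M = \<nu> \<and> u \<in> W \<and> v \<in> W \<and> u \<notin> \<Union>M \<and> v \<notin> \<Union>M
          \<and> u \<noteq> v \<and> (u, v) \<in> RR W G ^^ m"
    then have M: "matchin W G M" and cM: "card M = \<nu>" and uW: "u \<in> W" and vW: "v \<in> W"
      and uM: "u \<notin> \<Union>M" and vM: "v \<notin> \<Union>M" and uv: "u \<noteq> v" and P: "(u, v) \<in> RR W G ^^ m"
      by auto
    have fM: "finite M" using match_fin[OF fin M] .
    consider "m = 0" | "m = 1" | m' where "m = Suc m'" "m' \<ge> 1"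
      by (metis One_nat_def Suc_pred' less_one linorder_not_le not_gr0)
    then show False
    proof cases
      case 1 then show False using P uv by simp
    next
      case 2
      then have "{u, v} \<in> G" using P by (simp add: RR_def)
      then have "matchin W G (insert {u, v} M) \<and> card (insert {u, v} M) = Suc (card M)"
        using match_insert_card[OF fin M] uW vW uM vM by auto
      then show False using maxm cM by fastforce
    next
      case 3
      obtain w where uw: "(u, w) \<in> RR W G" and wv: "(w, v) \<in> RR W G ^^ m'"
        using relpow_Suc_D2[OF P[unfolded 3(1)]] by blast
      have wW: "w \<in> W" and uwG: "{u, w} \<in> G" using uw by (auto simp: RR_def)
      have "card {u, w} = 2" using c2 uwG by blast
      then have "u \<noteq> w" by (cases "u = w") auto
      have uw1: "(u, w) \<in> RR W G ^^ 1" using uw by simp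
      have wM: "w \<in> \<Union>M"
      proof (rule ccontr)
        assume "w \<notin> \<Union>M"
        moreover have "(1::nat) < m" using 3 by simp
        ultimately show False using less.IH[of 1, rule_format, of M u w] M cM uW wW uM \<open>u \<noteq> w\<close> uw1 by blast
      qed
      then have "w \<noteq> v" using vM by blast
      define Q where "Q = {N. matchin (W - {w}) G N \<and> card N = \<nu>}"
      have fQ: "finite Q"
        by (rule finite_subset[of _ "Pow (Pow W)"]) (use fin in \<open>auto simp: Q_def matchin_def\<close>)
      have Qne: "Q \<noteq> {}" using B wW by (auto simp: Q_def)
      define K where "K = Max ((\<lambda>N. card (M \<inter> N)) ` Q)"
      obtain N where NQ: "N \<in> Q" and NK: "card (M \<inter> N) = K"
      proof -
        have "K \<in> (\<lambda>N. card (M \<inter> N)) ` Q" unfolding K_def by (rule Max_in) (use fQ Qne in auto)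
        then show ?thesis using that by blast
      qed
      have Kmax: "\<And>N'. N' \<in> Q \<Longrightarrow> card (M \<inter> N') \<le> K"
        unfolding K_def using fQ by auto
      have Nw: "matchin (W - {w}) G N" and cN: "card N = \<nu>" using NQ by (auto simp: Q_def)
      have N: "matchin W G N" using match_mono[OF Nw] by blast
      have fN: "finite N" using match_fin[OF fin N] .
      have wN: "w \<notin> \<Union>N" using Nw by (auto simp: matchin_def)
      have uN: "u \<in> \<Union>N"
      proof (rule ccontr)
        assume "u \<notin> \<Union>N"
        moreover have "(1::nat) < m" using 3 by simp
        ultimately show False using less.IH[of 1, rule_format, of N u w] N cN uW wW wN \<open>u \<noteq> w\<close> uw1 by blast
      qed
      have vN: "v \<in> \<Union>N"
      proof (rule ccontr)
        assume "v \<notin> \<Union>N"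
        moreover have "m' < m" using 3 by simp
        ultimately show False using less.IH[of m', rule_format, of N w v] N cN vW wW wN \<open>w \<noteq> v\<close> wv by blast
      qed
      have Mc2: "\<forall>e\<in>M. card e = 2" and Mdisj: "\<forall>g\<in>M. \<forall>h\<in>M. g \<noteq> h \<longrightarrow> g \<inter> h = {}"
        using M c2 unfolding matchin_def by blast+
      have Nc2: "\<forall>e\<in>N. card e = 2" and Ndisj: "\<forall>g\<in>N. \<forall>h\<in>N. g \<noteq> h \<longrightarrow> g \<inter> h = {}"
        using N c2 unfolding matchin_def by blast+
      have cUM: "card (\<Union>M) = 2 * \<nu>"
        using union_card[OF fM Mc2 Mdisj] cM by simp
      have cUN: "card (\<Union>N) = 2 * \<nu>"
        using union_card[OF fN Nc2 Ndisj] cN by simp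
      have fUM: "finite (\<Union>M)" using fM Mc2 by (simp add: card_ge_0_finite)
      have fUN: "finite (\<Union>N)" using fN Nc2 by (simp add: card_ge_0_finite)
      have "card {u, v} \<le> card (\<Union>N - \<Union>M)"
        by (rule card_mono) (use fUN uN vN uM vM in auto)
      then have c2d: "2 \<le> card (\<Union>N - \<Union>M)" using uv by simp
      have "card (\<Union>M - \<Union>N) = card (\<Union>N - \<Union>M)"
        using card_Diff_subset_Int[of "\<Union>M" "\<Union>N"] card_Diff_subset_Int[of "\<Union>N" "\<Union>M"]
          fUM fUN cUM cUN by (simp add: Int_commute)
      then have c2e: "2 \<le> card (\<Union>M - \<Union>N)" using c2d by simp
      obtain z where zM: "z \<in> \<Union>M" and zN: "z \<notin> \<Union>N" and zw: "z \<noteq> w"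
      proof (rule ccontr)
        assume "\<not> thesis"
        then have "\<Union>M - \<Union>N \<subseteq> {w}" using that by blast
        then have "card (\<Union>M - \<Union>N) \<le> card {w}" by (intro card_mono) auto
        then show False using c2e by simp
      qed
      obtain e where eM: "e \<in> M" and ze: "z \<in> e" using zM by blast
      have "card e = 2" using c2 M eM by (auto simp: matchin_def)
      then obtain a b where "e = {a, b}" "a \<noteq> b" by (auto simp: card_2_iff)
      then obtain y where ezy: "e = {z, y}" and "z \<noteq> y"
        using ze by (metis insert_commute insert_iff singletonD)
      have eG: "e \<in> G" and eW: "e \<subseteq> W" using M eM by (auto simp: matchin_def)
      have yN: "y \<in> \<Union>N"
      proof (rule ccontr)
        assume "y \<notin> \<Union>N"
        then have "e \<inter> \<Union>N = {}" using zN ezy by auto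
        then have "matchin W G (insert e N) \<and> card (insert e N) = Suc (card N)"
          using match_insert_card[OF fin N eG eW] ezy by auto
        then show False using maxm cN by fastforce
      qed
      then obtain f where fN': "f \<in> N" and yf: "y \<in> f" by blast
      define N' where "N' = insert e (N - {f})"
      have zf: "z \<notin> f" using zN fN' by blast
      have yw: "y \<noteq> w" using yN wN by blast
      have eg: "e \<inter> g = {}" if "g \<in> N - {f}" for g
      proof -
        have "z \<notin> g" using zN that by blast
        moreover have "y \<notin> g" using Ndisj fN' yf that by blast
        ultimately show ?thesis using ezy by auto
      qed
      have N'm: "matchin (W - {w}) G N'"
        unfolding matchin_def N'_def
      proof (intro conjI)
        show "insert e (N - {f}) \<subseteq> G" using eG Nw by (auto simp: matchin_def)
        show "\<forall>g\<in>insert e (N - {f}). g \<subseteq> W - {w}"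
          using Nw eW zw yw ezy by (auto simp: matchin_def)
        show "\<forall>g\<in>insert e (N - {f}). \<forall>h\<in>insert e (N - {f}). g \<noteq> h \<longrightarrow> g \<inter> h = {}"
          using eg Ndisj by blast
      qed
      have eN: "e \<notin> N" using zN ze by blast
      have cN': "card N' = \<nu>"
        unfolding N'_def using eN fN fN' cN by (simp add: card_Suc_Diff1 del: card_Diff_insert)
      have N'Q: "N' \<in> Q" using N'm cN' by (simp add: Q_def)
      have fM': "f \<notin> M"
      proof
        assume "f \<in> M"
        moreover have "f \<noteq> e" using zf ze by blast
        ultimately have "e \<inter> f = {}" using Mdisj eM by blast
        then show False using yf ezy by blast
      qed
      have "M \<inter> N' = insert e (M \<inter> N)" unfolding N'_def using eM fM' by blast
      then have "card (M \<inter> N') = Suc K" using NK eN fN by simp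
      then show False using Kmax[OF N'Q] by simp
    qed
  qed
qed



lemma comp_cover:
  assumes fin: "finite W" and c2: "\<forall>e\<in>G. card e = 2" and M: "matchin W G M"
    and maxm: "\<forall>M'. matchin W G M' \<longrightarrow> card M' \<le> card M"
    and B: "\<forall>v\<in>W. \<exists>M'. matchin (W - {v}) G M' \<and> card M' = card M"
    and C: "C \<in> comps W G"
  shows "card C div 2 \<le> card {e\<in>M. e \<subseteq> C}"
proof -
  let ?MC = "{e\<in>M. e \<subseteq> C}"
  have CW: "C \<subseteq> W" using comps_sub[OF C] .
  have fC: "finite C" using CW fin finite_subset by blast
  have fM: "finite M" using match_fin[OF fin M] .
  have fMC: "finite ?MC" using fM by simp
  have MG: "M \<subseteq> G" and Md: "\<forall>e\<in>M. \<forall>f\<in>M. e \<noteq> f \<longrightarrow> e \<inter> f = {}"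
    using M unfolding matchin_def by auto
  have c2M: "\<forall>e\<in>?MC. card e = 2" using MG c2 by auto
  have dM: "\<forall>e\<in>?MC. \<forall>f\<in>?MC. e \<noteq> f \<longrightarrow> e \<inter> f = {}" using Md by auto
  have cU: "card (\<Union>?MC) = 2 * card ?MC" using union_card[OF fMC c2M dM] .
  obtain c where Cc: "C = cls W G c" using C unfolding comps_def by blast
  have U1: "card (C - \<Union>M) \<le> 1"
  proof -
    have "\<forall>a1\<in>C - \<Union>M. \<forall>a2\<in>C - \<Union>M. a1 = a2"
    proof (intro ballI, rule ccontr)
      fix a1 a2 assume a1: "a1 \<in> C - \<Union>M" and a2: "a2 \<in> C - \<Union>M" and ne: "a1 \<noteq> a2"
      have "(c, a1) \<in> (RR W G)\<^sup>*" "(c, a2) \<in> (RR W G)\<^sup>*" using a1 a2 Cc unfolding cls_def by auto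
      then have "(a1, a2) \<in> (RR W G)\<^sup>*" using RRs_sym rtrancl_trans by metis
      then obtain m where "(a1, a2) \<in> RR W G ^^ m" using rtrancl_power by blast
      moreover have "a1 \<in> W" "a2 \<in> W" using a1 a2 CW by auto
      ultimately show False
        using gallai[OF fin c2 maxm B, of m, rule_format, of M a1 a2] M a1 a2 ne by blast
    qed
    then show ?thesis using card_le_Suc0_iff_eq[of "C - \<Union>M"] fC by simp
  qed
  have sub: "C \<inter> \<Union>M \<subseteq> \<Union>?MC"
  proof
    fix x assume x: "x \<in> C \<inter> \<Union>M"
    then obtain e where eM: "e \<in> M" and xe: "x \<in> e" by blast
    have "e \<in> G" "card e = 2" "e \<subseteq> W" using M c2 eM unfolding matchin_def by auto
    then obtain C' where C': "C' \<in> comps W G" "e \<subseteq> C'" using edge_in_comp by metis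
    then have "C' = C" using comps_disj[OF C' (1) C] x xe by blast
    then show "x \<in> \<Union>?MC" using C' eM xe by blast
  qed
  have "card C \<le> card (C \<inter> \<Union>M) + card (C - \<Union>M)"
  proof -
    have "C = (C \<inter> \<Union>M) \<union> (C - \<Union>M)" by blast
    then have "card C = card ((C \<inter> \<Union>M) \<union> (C - \<Union>M))" by simp
    also have "\<dots> \<le> card (C \<inter> \<Union>M) + card (C - \<Union>M)" by (rule card_Un_le)
    finally show ?thesis .
  qed
  also have "card (C \<inter> \<Union>M) \<le> card (\<Union>?MC)"
    by (rule card_mono[OF _ sub]) (rule finite_subset[OF _ fC], blast)
  finally show ?thesis using U1 cU by simp
qed

lemma TB:
  "finite W \<Longrightarrow> \<forall>e\<in>G. card e = 2 \<Longrightarrow> \<forall>M. matchin W G M \<longrightarrow> card M \<le> s \<Longrightarrow>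
   \<exists>X \<subseteq> W. card X + (\<Sum>C\<in>comps (W - X) G. card C div 2) \<le> s"
proof (induction "card W" arbitrary: W s rule: less_induct)
  case less
  note fin = less.prems(1) and c2 = less.prems(2) and hs = less.prems(3)
  define S where "S = card ` {M. matchin W G M}"
  have "{M. matchin W G M} \<subseteq> Pow (Pow W)" unfolding matchin_def by blast
  then have fS: "finite S" unfolding S_def using fin by (meson finite_Pow_iff finite_imageI finite_subset)
  have m0: "matchin W G {}" by (simp add: matchin_def)
  then have S0: "S \<noteq> {}" unfolding S_def by blast
  define \<nu> where "\<nu> = Max S"
  obtain M0 where M0: "matchin W G M0" and cM0: "card M0 = \<nu>"
  proof -
    have "\<nu> \<in> S" unfolding \<nu>_def using fS S0 by (rule Max_in)
    then show ?thesis using that unfolding S_def by blast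
  qed
  have maxm: "\<forall>M. matchin W G M \<longrightarrow> card M \<le> \<nu>"
    unfolding \<nu>_def S_def using fS S_def by auto
  have "\<nu> \<le> s" using hs M0 cM0 by blast
  show ?case
  proof (cases "\<exists>v\<in>W. \<forall>M. matchin (W - {v}) G M \<longrightarrow> card M < \<nu>")
    case True
    then obtain v where vW: "v \<in> W" and hv: "\<forall>M. matchin (W - {v}) G M \<longrightarrow> card M < \<nu>" by blast
    have "0 < \<nu>" using hv[rule_format, of "{}"] by (simp add: matchin_def)
    have "card (W - {v}) < card W" using vW fin by (rule card_Diff1_less[rotated])
    moreover have "\<forall>M. matchin (W - {v}) G M \<longrightarrow> card M \<le> \<nu> - 1" using hv by fastforce
    ultimately obtain X' where X': "X' \<subseteq> W - {v}"
      and hX': "card X' + (\<Sum>C\<in>comps (W - {v} - X') G. card C div 2) \<le> \<nu> - 1"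
      using less.hyps[of "W - {v}" "\<nu> - 1"] fin c2 by auto
    have eq: "W - insert v X' = W - {v} - X'" by blast
    have fX': "finite X'" using X' fin finite_subset by blast
    have "v \<notin> X'" using X' by blast
    then have "card (insert v X') = Suc (card X')" using fX' by simp
    then have "card (insert v X') + (\<Sum>C\<in>comps (W - insert v X') G. card C div 2) \<le> s"
      using hX' eq \<open>0 < \<nu>\<close> \<open>\<nu> \<le> s\<close> by simp
    moreover have "insert v X' \<subseteq> W" using X' vW by blast
    ultimately show ?thesis by blast
  next
    case False
    have B: "\<forall>v\<in>W. \<exists>M'. matchin (W - {v}) G M' \<and> card M' = card M0"
    proof
      fix v assume "v \<in> W"
      then obtain M where "matchin (W - {v}) G M" "\<not> card M < \<nu>" using False by blast
      moreover have "card M \<le> \<nu>" using maxm match_mono[OF calculation(1)] by blast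
      ultimately show "\<exists>M'. matchin (W - {v}) G M' \<and> card M' = card M0" using cM0 by auto
    qed
    have maxm': "\<forall>M'. matchin W G M' \<longrightarrow> card M' \<le> card M0" using maxm cM0 by simp
    have "(\<Sum>C\<in>comps W G. card C div 2) \<le> (\<Sum>C\<in>comps W G. card {e\<in>M0. e \<subseteq> C})"
      by (rule sum_mono) (rule comp_cover[OF fin c2 M0 maxm' B])
    also have "\<dots> = card (\<Union>C\<in>comps W G. {e\<in>M0. e \<subseteq> C})"
    proof (rule card_UN_disjoint[symmetric])
      show "finite (comps W G)" using comps_fin[OF fin] .
      show "\<forall>C\<in>comps W G. finite {e \<in> M0. e \<subseteq> C}" using match_fin[OF fin M0] by simp
      show "\<forall>C\<in>comps W G. \<forall>C'\<in>comps W G. C \<noteq> C' \<longrightarrow> {e \<in> M0. e \<subseteq> C} \<inter> {e \<in> M0. e \<subseteq> C'} = {}"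
      proof (intro ballI impI)
        fix C C' assume CC: "C \<in> comps W G" "C' \<in> comps W G" "C \<noteq> C'"
        show "{e \<in> M0. e \<subseteq> C} \<inter> {e \<in> M0. e \<subseteq> C'} = {}"
        proof (rule ccontr)
          assume "{e \<in> M0. e \<subseteq> C} \<inter> {e \<in> M0. e \<subseteq> C'} \<noteq> {}"
          then obtain e where "e \<in> M0" "e \<subseteq> C" "e \<subseteq> C'" by blast
          moreover have "card e = 2" using \<open>e \<in> M0\<close> M0 c2 unfolding matchin_def by blast
          then obtain x where "x \<in> e" by (metis card.empty ex_in_conv zero_neq_numeral)
          ultimately show False using comps_disj[OF CC(1,2)] CC(3) by blast
        qed
      qed
    qed
    also have "\<dots> \<le> card M0"
      by (rule card_mono) (use match_fin[OF fin M0] in auto)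
    finally have "card {} + (\<Sum>C\<in>comps (W - {}) G. card C div 2) \<le> s" using cM0 \<open>\<nu> \<le> s\<close> by simp
    then show ?thesis by blast
  qed
qed



lemma no_match_bound:
  assumes "\<not> contains_matching (Suc s) G" "matchin W G M"
  shows "card M \<le> s"
proof (rule ccontr)
  assume "\<not> card M \<le> s"
  then obtain T where T: "T \<subseteq> M" "card T = Suc s"
    using obtain_subset_with_card_n[of "Suc s" M] by auto
  have "T \<subseteq> G" "\<forall>e\<in>T. \<forall>f\<in>T. e \<noteq> f \<longrightarrow> e \<inter> f = {}"
    using assms(2) T(1) unfolding matchin_def by (blast, blast)
  then have "contains_matching (Suc s) G" unfolding contains_matching_def using T(2) by blast
  then show False using assms(1) by blast
qed

lemma exists_admissible:
  assumes "is_graph n G" "\<not> contains_matching (Suc s) G"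
  shows "\<exists>X. admissible n s G X"
proof -
  have c2: "\<forall>e\<in>G. card e = 2" using assms(1) unfolding is_graph_def by blast
  have "\<forall>M. matchin {0..<n} G M \<longrightarrow> card M \<le> s" using no_match_bound[OF assms(2)] by blast
  then obtain X where "X \<subseteq> {0..<n}" "card X + (\<Sum>C\<in>comps ({0..<n} - X) G. card C div 2) \<le> s"
    using TB[of "{0..<n}" G s] c2 by auto
  then show ?thesis unfolding admissible_def components_eq by blast
qed

lemma admissible_of_xG:
  assumes "is_graph n G" "\<not> contains_matching (Suc s) G"
  obtains X where "admissible n s G X" "card X = xG n s G"
proof -
  define S where "S = {card X | X. admissible n s G X}"
  have "S \<subseteq> {..n}" unfolding S_def admissible_def
    using card_mono[of "{0..<n}"] by fastforce
  then have fS: "finite S" using finite_subset by blast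
  have "S \<noteq> {}" using exists_admissible[OF assms] unfolding S_def by blast
  then have "Max S \<in> S" using fS by (intro Max_in) auto
  then show ?thesis using that unfolding S_def xG_def by auto
qed

lemma upper:
  assumes gr: "is_graph n G" and nm: "\<not> contains_matching (Suc s) G"
  shows "card G \<le> xG n s G * n + ((3 * s) choose 2)"
proof -
  obtain X where adm: "admissible n s G X" and cX: "card X = xG n s G"
    using admissible_of_xG[OF gr nm] by blast
  define W where "W = {0..<n} - X"
  have X: "X \<subseteq> {0..<n}" using adm unfolding admissible_def by blast
  have sumS: "(\<Sum>C\<in>comps W G. card C div 2) \<le> s"
    using adm unfolding admissible_def components_eq W_def by simp
  have c2: "\<forall>e\<in>G. card e = 2" and eV: "\<forall>e\<in>G. e \<subseteq> {0..<n}" using gr unfolding is_graph_def by auto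
  have finW: "finite W" unfolding W_def by simp
  have fX: "finite X" using X finite_subset by blast
  define G1 where "G1 = {e\<in>G. e \<inter> X \<noteq> {}}"
  define G2 where "G2 = {e\<in>G. e \<inter> X = {}}"
  have GU: "G = G1 \<union> G2" unfolding G1_def G2_def by blast
  have "G1 \<subseteq> (\<Union>a\<in>X. (\<lambda>b. {a, b}) ` {0..<n})"
  proof
    fix e assume e: "e \<in> G1"
    then obtain a where a: "a \<in> e" "a \<in> X" unfolding G1_def by blast
    have "card e = 2" "e \<subseteq> {0..<n}" using e c2 eV unfolding G1_def by auto
    then obtain u v where uv: "e = {u, v}" "u \<in> {0..<n}" "v \<in> {0..<n}" by (auto simp: card_2_iff)
    then have "e = {a, u} \<and> u \<in> {0..<n} \<or> e = {a, v} \<and> v \<in> {0..<n}" using a(1) by auto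
    then show "e \<in> (\<Union>a\<in>X. (\<lambda>b. {a, b}) ` {0..<n})" using a(2) by blast
  qed
  then have "card G1 \<le> card (\<Union>a\<in>X. (\<lambda>b. {a, b}) ` {0..<n})"
    by (intro card_mono) (auto simp: fX)
  also have "\<dots> \<le> (\<Sum>a\<in>X. card ((\<lambda>b. {a, b}) ` {0..<n}))" by (rule card_UN_le[OF fX])
  also have "\<dots> \<le> (\<Sum>a\<in>X. n)"
    by (rule sum_mono) (metis card_atLeastLessThan card_image_le finite_atLeastLessThan minus_nat.diff_0)
  finally have cG1: "card G1 \<le> xG n s G * n" using cX by simp
  define Big where "Big = {C \<in> comps W G. 2 \<le> card C}"
  define N where "N = \<Union>Big"
  have fBig: "finite Big" unfolding Big_def using comps_fin[OF finW] by simp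
  have "\<forall>C\<in>Big. finite C" unfolding Big_def by (auto intro: card_ge_0_finite)
  then have fN: "finite N" unfolding N_def using fBig by blast
  have "G2 \<subseteq> {B. B \<subseteq> N \<and> card B = 2}"
  proof
    fix e assume e: "e \<in> G2"
    have "card e = 2" "e \<subseteq> {0..<n}" "e \<in> G" using e c2 eV unfolding G2_def by auto
    moreover have "e \<subseteq> W" using e \<open>e \<subseteq> {0..<n}\<close> unfolding G2_def W_def by blast
    ultimately obtain C where C: "C \<in> comps W G" "e \<subseteq> C" using edge_in_comp by metis
    have "finite C" using C(1) comps_sub[of C W G] finW by (meson finite_subset)
    then have "card e \<le> card C" using C(2) card_mono by blast
    then have "C \<in> Big" using C(1) \<open>card e = 2\<close> unfolding Big_def by simp
    then show "e \<in> {B. B \<subseteq> N \<and> card B = 2}" using C(2) \<open>card e = 2\<close> unfolding N_def by blast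
  qed
  then have "card G2 \<le> card {B. B \<subseteq> N \<and> card B = 2}" by (intro card_mono) (auto simp: fN)
  also have "\<dots> = card N choose 2" using n_subsets[OF fN] .
  finally have cG2a: "card G2 \<le> card N choose 2" .
  have "card N \<le> sum card Big" unfolding N_def by (rule card_Union_le_sum_card)
  also have "\<dots> \<le> (\<Sum>C\<in>Big. 3 * (card C div 2))"
    by (rule sum_mono) (auto simp: Big_def)
  also have "\<dots> \<le> (\<Sum>C\<in>comps W G. 3 * (card C div 2))"
    by (rule sum_mono2) (auto simp: Big_def comps_fin finW)
  also have "\<dots> = 3 * (\<Sum>C\<in>comps W G. card C div 2)" by (simp add: sum_distrib_left)
  also have "\<dots> \<le> 3 * s" using sumS by simp
  finally have "card N \<le> 3 * s" .
  then have "card N choose 2 \<le> (3 * s) choose 2" by (rule binomial_right_mono)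
  then have cG2: "card G2 \<le> (3 * s) choose 2" using cG2a by simp
  have "card G \<le> card G1 + card G2" unfolding GU by (rule card_Un_le)
  then show ?thesis using cG1 cG2 by simp
qed



definition Tri :: "nat \<Rightarrow> nat \<Rightarrow> nat set" where
  "Tri p i = {p + 3 * i ..< p + 3 * i + 3}"

definition Gs :: "nat \<Rightarrow> nat \<Rightarrow> nat \<Rightarrow> nat set set" where
  "Gs n p k = {{a, f} | a f. a < p \<and> p + 3 * k \<le> f \<and> f < n}"

definition Gt :: "nat \<Rightarrow> nat \<Rightarrow> nat set set" where
  "Gt p k = {e. card e = 2 \<and> (\<exists>i<k. e \<subseteq> Tri p i)}"

definition G0 :: "nat \<Rightarrow> nat \<Rightarrow> nat \<Rightarrow> nat set set" where
  "G0 n p k = Gs n p k \<union> Gt p k"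

lemma Tri_idx: "m \<in> Tri p i \<Longrightarrow> (m - p) div 3 = i"
  unfolding Tri_def by (auto intro!: div_nat_eqI)

lemma Tri_ge: "m \<in> Tri p i \<Longrightarrow> p \<le> m"
  unfolding Tri_def by auto

lemma Tri_lt: "m \<in> Tri p i \<Longrightarrow> i < k \<Longrightarrow> m < p + 3 * k"
  unfolding Tri_def by auto

lemma Tri_disj: "i \<noteq> j \<Longrightarrow> Tri p i \<inter> Tri p j = {}"
  using Tri_idx by blast

lemma Tri_card: "card (Tri p i) = 3"
  unfolding Tri_def by simp

lemma Tri_fin: "finite (Tri p i)"
  unfolding Tri_def by simp

lemma Tri_mem: "p \<le> m \<Longrightarrow> m \<in> Tri p ((m - p) div 3)"
  unfolding Tri_def by auto

lemma G0_cases: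
  assumes "e \<in> G0 n p k"
  shows "(\<exists>a f. e = {a, f} \<and> a < p \<and> p + 3 * k \<le> f \<and> f < n) \<or> (card e = 2 \<and> (\<exists>i<k. e \<subseteq> Tri p i))"
  using assms unfolding G0_def Gs_def Gt_def by blast

lemma G0_graph:
  assumes "p + 3 * k \<le> n"
  shows "is_graph n (G0 n p k)"
  unfolding is_graph_def
proof
  fix e assume "e \<in> G0 n p k"
  then consider (s) a f where "e = {a, f}" "a < p" "p + 3 * k \<le> f" "f < n"
    | (t) i where "card e = 2" "i < k" "e \<subseteq> Tri p i" using G0_cases by blast
  then show "e \<subseteq> {0..<n} \<and> card e = 2"
  proof cases
    case s then show ?thesis by auto
  next
    case t
    have "e \<subseteq> {0..<n}" using t(2,3) Tri_lt[of _ p i k] assms by fastforce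
    then show ?thesis using t by simp
  qed
qed

lemma nbr_small:
  assumes "p \<le> a" "2 \<le> p"
  shows "\<exists>S. finite S \<and> card S \<le> p \<and> {b. {a, b} \<in> G0 n p k} \<subseteq> S"
proof (cases "p + 3 * k \<le> a")
  case True
  have "{b. {a, b} \<in> G0 n p k} \<subseteq> {0..<p}"
  proof
    fix b assume "b \<in> {b. {a, b} \<in> G0 n p k}"
    then consider (s) a' f where "{a, b} = {a', f}" "a' < p" "p + 3 * k \<le> f" "f < n"
      | (t) i where "i < k" "{a, b} \<subseteq> Tri p i" using G0_cases by blast
    then show "b \<in> {0..<p}"
    proof cases
      case s then show ?thesis using assms by (auto simp: doubleton_eq_iff)
    next
      case t then show ?thesis using Tri_lt[of a p i k] True by auto
    qed
  qed
  then show ?thesis by (intro exI[of _ "{0..<p}"]) simp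
next
  case False
  define i where "i = (a - p) div 3"
  have sub: "{b. {a, b} \<in> G0 n p k} \<subseteq> Tri p i - {a}"
  proof
    fix b assume "b \<in> {b. {a, b} \<in> G0 n p k}"
    then consider (s) a' f where "{a, b} = {a', f}" "a' < p" "p + 3 * k \<le> f" "f < n"
      | (t) j where "card {a, b} = 2" "j < k" "{a, b} \<subseteq> Tri p j" using G0_cases by blast
    then show "b \<in> Tri p i - {a}"
    proof cases
      case s then show ?thesis using assms False by (auto simp: doubleton_eq_iff)
    next
      case t
      have "j = i" using Tri_idx[of a p j] t(3) i_def by auto
      moreover have "a \<noteq> b" using t(1) by (cases "a = b") auto
      ultimately show ?thesis using t(3) by auto
    qed
  qed
  moreover have "a \<in> Tri p i" unfolding i_def using Tri_mem assms(1) .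
  then have "card (Tri p i - {a}) = 2" using Tri_card Tri_fin by simp
  ultimately show ?thesis using assms(2) sub by (intro exI[of _ "Tri p i - {a}"]) (simp add: Tri_fin)
qed

lemma G0_noKlt:
  assumes "2 \<le> p" "p + 1 \<le> t"
  shows "\<not> contains_Klt n (p + 1) t (G0 n p k)"
proof
  assume "contains_Klt n (p + 1) t (G0 n p k)"
  then obtain A B where AB: "A \<subseteq> {0..<n}" "B \<subseteq> {0..<n}" "card A = p + 1" "card B = t"
    "\<forall>a\<in>A. \<forall>b\<in>B. {a, b} \<in> G0 n p k" unfolding contains_Klt_def by blast
  obtain a where a: "a \<in> A" "p \<le> a"
  proof (rule ccontr)
    assume "\<not> thesis"
    then have "A \<subseteq> {0..<p}" using that by force
    then have "card A \<le> p" by (metis card_atLeastLessThan card_mono finite_atLeastLessThan minus_nat.diff_0)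
    then show False using AB(3) by simp
  qed
  have "B \<subseteq> {b. {a, b} \<in> G0 n p k}" using AB(5) a(1) by blast
  moreover obtain S where "finite S" "card S \<le> p" "{b. {a, b} \<in> G0 n p k} \<subseteq> S"
    using nbr_small[OF a(2) assms(1), of n k] by blast
  ultimately have "card B \<le> p" by (meson card_mono order_trans subset_trans)
  then show False using AB(4) assms(2) by simp
qed



lemma G0_match_le:
  assumes M: "M \<subseteq> G0 n p k" and d: "\<forall>e\<in>M. \<forall>f\<in>M. e \<noteq> f \<longrightarrow> e \<inter> f = {}"
  shows "card M \<le> p + k"
proof -
  define \<phi> where "\<phi> e = (if Min e < p then Min e else p + (Min e - p) div 3)" for e :: "nat set"
  have props: "(\<phi> e < p \<and> \<phi> e \<in> e) \<or> (\<exists>i<k. \<phi> e = p + i \<and> e \<subseteq> Tri p i \<and> card e = 2)"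
    if "e \<in> G0 n p k" for e
  proof -
    from G0_cases[OF that] consider (s) a f where "e = {a, f}" "a < p" "p + 3 * k \<le> f" "f < n"
      | (t) i where "card e = 2" "i < k" "e \<subseteq> Tri p i" by blast
    then show ?thesis
    proof cases
      case s
      then have "Min e = a" by simp
      then show ?thesis using s unfolding \<phi>_def by simp
    next
      case t
      have "e \<noteq> {}" using t(1) by auto
      moreover have "finite e" using t(1) by (intro card_ge_0_finite) simp
      ultimately have "Min e \<in> e" by simp
      then have "Min e \<in> Tri p i" using t(3) by blast
      then have "\<phi> e = p + i" unfolding \<phi>_def using Tri_idx Tri_ge by fastforce
      then show ?thesis using t by blast
    qed
  qed
  have "inj_on \<phi> M"
  proof
    fix e e' assume e: "e \<in> M" and e': "e' \<in> M" and eq: "\<phi> e = \<phi> e'"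
    show "e = e'"
    proof (rule ccontr)
      assume ne: "e \<noteq> e'"
      then have dis: "e \<inter> e' = {}" using d e e' by blast
      have "e \<in> G0 n p k" "e' \<in> G0 n p k" using M e e' by auto
      from props[OF this(1)] props[OF this(2)] show False
      proof (elim disjE conjE exE)
        assume "\<phi> e \<in> e" "\<phi> e' \<in> e'" then show False using eq dis by auto
      next
        fix i assume "\<phi> e < p" "\<phi> e' = p + i" then show False using eq by simp
      next
        fix i assume "\<phi> e' < p" "\<phi> e = p + i" then show False using eq by simp
      next
        fix i j assume h: "\<phi> e = p + i" "e \<subseteq> Tri p i" "card e = 2" "\<phi> e' = p + j" "e' \<subseteq> Tri p j" "card e' = 2"
        then have "i = j" using eq by simp
        then have "e \<union> e' \<subseteq> Tri p i" using h by blast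
        then have "card (e \<union> e') \<le> 3" using Tri_card Tri_fin card_mono by metis
        moreover have "card (e \<union> e') = 4"
          using card_Un_disjoint[of e e'] dis h(3,6) card_ge_0_finite by force
        ultimately show False by simp
      qed
    qed
  qed
  moreover have "\<phi> ` M \<subseteq> {..<p + k}"
  proof
    fix x assume "x \<in> \<phi> ` M"
    then obtain e where "e \<in> M" "x = \<phi> e" by blast
    moreover then have "e \<in> G0 n p k" using M by auto
    ultimately show "x \<in> {..<p + k}" using props[of e] by auto
  qed
  ultimately show ?thesis using card_inj_on_le[of \<phi> M "{..<p + k}"] by simp
qed

lemma G0_nomatch:
  shows "\<not> contains_matching (Suc (p + k)) (G0 n p k)"
  unfolding contains_matching_def using G0_match_le by fastforce

lemma RR_step:
  assumes "(y, z) \<in> RR {p..<n} (G0 n p k)"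
  shows "y < p + 3 * k \<and> z \<in> Tri p ((y - p) div 3)"
proof -
  have yz: "p \<le> y" "p \<le> z" "{y, z} \<in> G0 n p k" using assms unfolding RR_def by auto
  from G0_cases[OF yz(3)] consider (s) a f where "{y, z} = {a, f}" "a < p"
      | (t) i where "i < k" "{y, z} \<subseteq> Tri p i" by blast
  then show ?thesis
  proof cases
    case s then show ?thesis using yz by (auto simp: doubleton_eq_iff)
  next
    case t
    then have "(y - p) div 3 = i" using Tri_idx by auto
    then show ?thesis using t Tri_lt[of y p i k] by auto
  qed
qed

lemma cls_shape:
  assumes "c \<in> {p..<n}" "(c, w) \<in> (RR {p..<n} (G0 n p k))\<^sup>*"
  shows "w = c \<or> (c < p + 3 * k \<and> w \<in> Tri p ((c - p) div 3))"
  using assms(2)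
proof (induction rule: rtrancl_induct)
  case base then show ?case by simp
next
  case (step y z)
  have st: "y < p + 3 * k \<and> z \<in> Tri p ((y - p) div 3)" using RR_step[OF step(2)] .
  from step(3) show ?case
  proof
    assume "y = c" then show ?thesis using st by simp
  next
    assume "c < p + 3 * k \<and> y \<in> Tri p ((c - p) div 3)"
    then show ?thesis using st Tri_idx by metis
  qed
qed

lemma comp_shape:
  assumes "C \<in> comps {p..<n} (G0 n p k)"
  shows "card C \<le> 3 \<and> (2 \<le> card C \<longrightarrow> (\<exists>i<k. C \<subseteq> Tri p i))"
proof -
  obtain c where c: "c \<in> {p..<n}" "C = cls {p..<n} (G0 n p k) c" using assms unfolding comps_def by blast
  show ?thesis
  proof (cases "c < p + 3 * k")
    case True
    define i where "i = (c - p) div 3"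
    have "c \<in> Tri p i" unfolding i_def using Tri_mem c(1) by simp
    then have "i < k" using True unfolding Tri_def by auto
    have "C \<subseteq> Tri p i"
    proof
      fix w assume "w \<in> C"
      then have "(c, w) \<in> (RR {p..<n} (G0 n p k))\<^sup>*" using c(2) unfolding cls_def by blast
      then show "w \<in> Tri p i" using cls_shape[OF c(1)] \<open>c \<in> Tri p i\<close> i_def by blast
    qed
    then have "card C \<le> 3" using Tri_card Tri_fin card_mono by metis
    then show ?thesis using \<open>C \<subseteq> Tri p i\<close> \<open>i < k\<close> by blast
  next
    case False
    have "C \<subseteq> {c}"
    proof
      fix w assume "w \<in> C"
      then have "(c, w) \<in> (RR {p..<n} (G0 n p k))\<^sup>*" using c(2) unfolding cls_def by blast
      then show "w \<in> {c}" using cls_shape[OF c(1)] False by blast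
    qed
    then have "card C \<le> 1" using card_mono[of "{c}" C] by simp
    then show ?thesis by simp
  qed
qed

lemma G0_sum_le:
  assumes "p \<le> n"
  shows "(\<Sum>C\<in>comps {p..<n} (G0 n p k). card C div 2) \<le> k"
proof -
  let ?A = "comps {p..<n} (G0 n p k)"
  have fA: "finite ?A" by (simp add: comps_fin)
  have "(\<Sum>C\<in>?A. card C div 2) \<le> (\<Sum>C\<in>?A. if 2 \<le> card C then 1 else 0)"
  proof (rule sum_mono)
    fix C assume "C \<in> ?A"
    then have "card C \<le> 3" using comp_shape by blast
    then show "card C div 2 \<le> (if 2 \<le> card C then 1 else 0)" by auto
  qed
  also have "\<dots> = card {C\<in>?A. 2 \<le> card C}"
    using sum.inter_filter[OF fA, of "\<lambda>_. 1::nat" "\<lambda>C. 2 \<le> card C"] by simp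
  also have "\<dots> \<le> k"
  proof -
    define \<psi> where "\<psi> C = (Min C - p) div 3" for C :: "nat set"
    have idx: "\<exists>i<k. C \<subseteq> Tri p i \<and> \<psi> C = i \<and> 2 \<le> card C" if "C \<in> {C\<in>?A. 2 \<le> card C}" for C
    proof -
      have CA: "C \<in> ?A" "2 \<le> card C" using that by auto
      obtain i where i: "i < k" "C \<subseteq> Tri p i" using comp_shape[OF CA(1)] CA(2) by blast
      have "C \<noteq> {}" "finite C" using that by (auto intro: card_ge_0_finite)
      then have "Min C \<in> C" by simp
      then have "\<psi> C = i" unfolding \<psi>_def using i Tri_idx by blast
      then show ?thesis using i that by blast
    qed
    have "inj_on \<psi> {C\<in>?A. 2 \<le> card C}"
    proof
      fix C C' assume C: "C \<in> {C\<in>?A. 2 \<le> card C}" and C': "C' \<in> {C\<in>?A. 2 \<le> card C}"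
        and eq: "\<psi> C = \<psi> C'"
      obtain i where i: "C \<subseteq> Tri p i" "\<psi> C = i" "2 \<le> card C" using idx[OF C] by blast
      obtain j where j: "C' \<subseteq> Tri p j" "\<psi> C' = j" "2 \<le> card C'" using idx[OF C'] by blast
      have "C \<inter> C' \<noteq> {}"
      proof
        assume dis: "C \<inter> C' = {}"
        have "C \<union> C' \<subseteq> Tri p i" using i j eq by simp
        then have "card (C \<union> C') \<le> 3" using Tri_card Tri_fin card_mono by metis
        moreover have "card (C \<union> C') = card C + card C'"
          using card_Un_disjoint[of C C'] dis i(3) j(3) card_ge_0_finite by force
        ultimately show False using i(3) j(3) by simp
      qed
      then show "C = C'" using comps_disj C C' by blast
    qed
    moreover have "\<psi> ` {C\<in>?A. 2 \<le> card C} \<subseteq> {..<k}" using idx by fastforce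
    ultimately show ?thesis using card_inj_on_le[of \<psi> _ "{..<k}"] by fastforce
  qed
  finally show ?thesis .
qed



lemma My:
  assumes n: "p + 3 * k + p < n" and y: "p \<le> y"
  shows "\<exists>M. matchin {0..<n} (G0 n p k) M \<and> card M = p + k \<and> y \<notin> \<Union>M"
proof -
  define q where "q = p + 3 * k"
  define g where "g a = (if q + a = y then q + p else q + a)" for a
  define st where "st a = {a, g a}" for a
  define E where "E i = (if y \<in> Tri p i then Tri p i - {y} else {p + 3 * i, p + 3 * i + 1})" for i
  define M where "M = st ` {..<p} \<union> E ` {..<k}"
  have g_ge: "q \<le> g a" for a unfolding g_def by auto
  have g_lt: "a < p \<Longrightarrow> g a < n" for a unfolding g_def using n q_def by auto
  have g_ne: "a < p \<Longrightarrow> g a \<noteq> y" for a unfolding g_def by auto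
  have g_inj: "a < p \<Longrightarrow> a' < p \<Longrightarrow> g a = g a' \<Longrightarrow> a = a'" for a a' unfolding g_def by (auto split: if_splits)
  have E_sub: "E i \<subseteq> Tri p i" for i unfolding E_def Tri_def by auto
  have E_card: "card (E i) = 2" for i
  proof (cases "y \<in> Tri p i")
    case True then show ?thesis unfolding E_def using Tri_card Tri_fin by simp
  next
    case False then show ?thesis unfolding E_def by simp
  qed
  have E_y: "y \<notin> E i" for i unfolding E_def Tri_def by auto
  have E_ne: "E i \<noteq> {}" for i using E_card by (metis card.empty zero_neq_numeral)
  have st_G: "a < p \<Longrightarrow> st a \<in> G0 n p k" for a
    unfolding st_def G0_def Gs_def using g_ge g_lt q_def by blast
  have E_G: "i < k \<Longrightarrow> E i \<in> G0 n p k" for i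
    unfolding G0_def Gt_def using E_card E_sub by blast
  have st_range: "x \<in> st a \<Longrightarrow> a < p \<Longrightarrow> x < p \<or> q \<le> x" for x a
    unfolding st_def using g_ge by auto
  have E_range: "x \<in> E i \<Longrightarrow> i < k \<Longrightarrow> p \<le> x \<and> x < q" for x i
    using E_sub Tri_ge Tri_lt q_def by blast
  have st_inj: "inj_on st {..<p}"
  proof
    fix a a' assume "a \<in> {..<p}" "a' \<in> {..<p}" "st a = st a'"
    moreover have "a \<noteq> g a'" using g_ge[of a'] calculation(1) q_def by auto
    ultimately show "a = a'" unfolding st_def by (auto simp: doubleton_eq_iff)
  qed
  have E_inj: "inj_on E {..<k}"
  proof
    fix i j assume "i \<in> {..<k}" "j \<in> {..<k}" "E i = E j"
    then have "E i \<subseteq> Tri p i \<inter> Tri p j" using E_sub[of i] E_sub[of j] by simp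
    then have "Tri p i \<inter> Tri p j \<noteq> {}" using E_ne[of i] by blast
    then show "i = j" using Tri_disj by blast
  qed
  have disj_imgs: "st ` {..<p} \<inter> E ` {..<k} = {}"
  proof (rule ccontr)
    assume "st ` {..<p} \<inter> E ` {..<k} \<noteq> {}"
    then obtain a i where ai: "a < p" "i < k" "st a = E i" by auto
    have "a \<in> E i" using ai(3) unfolding st_def by auto
    then show False using E_range[of a i] ai by simp
  qed
  have cM: "card M = p + k"
    unfolding M_def using card_Un_disjoint[OF _ _ disj_imgs] card_image[OF st_inj] card_image[OF E_inj]
    by simp
  have yM: "y \<notin> \<Union>M"
    unfolding M_def st_def using E_y g_ne y by auto
  have MG: "M \<subseteq> G0 n p k" unfolding M_def using st_G E_G by auto
  have MV: "\<forall>e\<in>M. e \<subseteq> {0..<n}"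
    using G0_graph[of p k n] n MG unfolding is_graph_def by auto
  have Md: "\<forall>e\<in>M. \<forall>f\<in>M. e \<noteq> f \<longrightarrow> e \<inter> f = {}"
  proof (intro ballI impI)
    fix e f assume e: "e \<in> M" and f: "f \<in> M" and ne: "e \<noteq> f"
    show "e \<inter> f = {}"
    proof (rule ccontr)
      assume "e \<inter> f \<noteq> {}"
      then obtain x where x: "x \<in> e" "x \<in> f" by blast
      consider (ss) a b where "a < p" "b < p" "e = st a" "f = st b"
        | (se) a j where "a < p" "j < k" "e = st a" "f = E j"
        | (es) i b where "i < k" "b < p" "e = E i" "f = st b"
        | (ee) i j where "i < k" "j < k" "e = E i" "f = E j"
        using e f unfolding M_def by blast
      then show False
      proof cases
        case ss
        then have "a \<noteq> b" using ne by blast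
        then show False using x ss g_inj g_ge[of a] g_ge[of b] q_def unfolding st_def by fastforce
      next
        case se then show False using x st_range E_range by fastforce
      next
        case es then show False using x st_range E_range by fastforce
      next
        case ee
        then have "i \<noteq> j" using ne by blast
        then show False using x ee E_sub Tri_disj by blast
      qed
    qed
  qed
  have "matchin {0..<n} (G0 n p k) M" unfolding matchin_def using MG MV Md by blast
  then show ?thesis using cM yM by blast
qed

lemma G0_xG:
  assumes p2: "2 \<le> p" and n: "p + 3 * k + p < n"
  shows "xG n (p + k) (G0 n p k) = p"
proof -
  let ?G = "G0 n p k"
  have gr: "is_graph n ?G" using G0_graph[of p k n] n by simp
  have c2: "\<forall>e\<in>?G. card e = 2" using gr unfolding is_graph_def by blast
  define S where "S = {card X | X. admissible n (p + k) ?G X}"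
  have "S \<subseteq> {..n}" unfolding S_def admissible_def
    using card_mono[of "{0..<n}"] by fastforce
  then have fS: "finite S" using finite_subset by blast
  have W0: "{0..<n} - {0..<p} = {p..<n}" by auto
  have "admissible n (p + k) ?G {0..<p}"
    unfolding admissible_def components_eq W0 using G0_sum_le[of p n k] n by simp
  then have pS: "p \<in> S" unfolding S_def by force
  have le: "card Y \<le> p" if adm: "admissible n (p + k) ?G Y" for Y
  proof (rule ccontr)
    assume "\<not> card Y \<le> p"
    then have cY: "p + 1 \<le> card Y" by simp
    have YV: "Y \<subseteq> {0..<n}" using adm unfolding admissible_def by blast
    have fY: "finite Y" using YV finite_subset by blast
    obtain y where y: "y \<in> Y" "p \<le> y"
    proof (rule ccontr)
      assume "\<not> thesis"
      then have "Y \<subseteq> {0..<p}" using that YV by force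
      then have "card Y \<le> p" by (metis card_atLeastLessThan card_mono finite_atLeastLessThan minus_nat.diff_0)
      then show False using cY by simp
    qed
    obtain M where M: "matchin {0..<n} ?G M" "card M = p + k" "y \<notin> \<Union>M"
      using My[OF n y(2)] by blast
    have fM: "finite M" using match_fin[OF _ M(1)] by simp
    define M1 where "M1 = {e\<in>M. e \<inter> Y = {}}"
    define M2 where "M2 = {e\<in>M. e \<inter> Y \<noteq> {}}"
    have "matchin ({0..<n} - Y) ?G M1" using M(1) unfolding matchin_def M1_def by blast
    then have c1: "card M1 \<le> (\<Sum>C\<in>comps ({0..<n} - Y) ?G. card C div 2)"
      using match_le_sum[OF _ c2] by simp
    define f where "f e = (SOME z. z \<in> e \<inter> Y)" for e
    have fe: "f e \<in> e \<inter> Y" if "e \<in> M2" for e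
    proof -
      have "\<exists>z. z \<in> e \<inter> Y" using that unfolding M2_def by blast
      then show ?thesis unfolding f_def by (rule someI_ex)
    qed
    have Md: "\<forall>e\<in>M. \<forall>f\<in>M. e \<noteq> f \<longrightarrow> e \<inter> f = {}" using M(1) unfolding matchin_def by blast
    have "inj_on f M2"
    proof
      fix e e' assume h: "e \<in> M2" "e' \<in> M2" "f e = f e'"
      have i1: "f e \<in> e" "f e' \<in> e'" using fe[OF h(1)] fe[OF h(2)] by auto
      have i2: "e \<in> M" "e' \<in> M" using h(1,2) unfolding M2_def by auto
      show "e = e'"
      proof (rule ccontr)
        assume "e \<noteq> e'"
        then have "e \<inter> e' = {}" using Md i2 by blast
        then show False using i1 h(3) by auto
      qed
    qed
    moreover have "f ` M2 \<subseteq> Y - {y}"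
    proof
      fix z assume "z \<in> f ` M2"
      then obtain e where e: "e \<in> M2" "z = f e" by blast
      then have "z \<in> e" "z \<in> Y" using fe[OF e(1)] by auto
      moreover have "e \<in> M" using e(1) unfolding M2_def by auto
      ultimately show "z \<in> Y - {y}" using M(3) by auto
    qed
    ultimately have "card M2 \<le> card (Y - {y})" using card_inj_on_le fY by blast
    moreover have "card Y > 0" using y(1) fY card_gt_0_iff by blast
    ultimately have c2': "card M2 + 1 \<le> card Y" using y(1) fY by (simp add: card_Diff_singleton)
    have "M = M1 \<union> M2" "M1 \<inter> M2 = {}" unfolding M1_def M2_def by auto
    then have "card M = card M1 + card M2" using fM card_Un_disjoint by (metis finite_Un)
    then show False using c1 c2' M(2) adm unfolding admissible_def components_eq by linarith
  qed
  have "Max S = p" by (rule Max_eqI[OF fS _ pS]) (use le in \<open>auto simp: S_def\<close>)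
  then show ?thesis unfolding xG_def S_def by simp
qed



lemma arith_main:
  fixes p k x n C :: nat
  assumes p2: "2 \<le> p" and k1: "1 \<le> k" and xp: "x + 1 \<le> p" and nC: "2 * C \<le> n"
    and C: "C = (3 * (p + k)) * (3 * (p + k) - 1) div 2"
  shows "x * n + C \<le> p * (n - (p + 3 * k))" and "p + 3 * k + p < n"
proof -
  define s where "s = p + k"
  have s2: "3 \<le> s" using p2 k1 s_def by simp
  define P where "P = (3 * s) * (3 * s - 1)"
  have "P \<le> 2 * C + 1" unfolding C P_def s_def by simp
  have P_eq: "P + 3 * s = 9 * (s * s)" unfolding P_def
  proof -
    have "3 * s * (3 * s - 1) + 3 * s = 3 * s * (3 * s - 1 + 1)" by (simp add: algebra_simps)
    also have "\<dots> = 3 * s * (3 * s)" using s2 by simp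
    finally show "3 * s * (3 * s - 1) + 3 * s = 9 * (s * s)" by simp
  qed
  have ss: "3 * s \<le> s * s" using mult_le_mono1[OF s2, of s] .
  then have "3 * s + 1 \<le> 3 * (s * s)" using s2 by linarith
  then have C3: "3 * (s * s) \<le> C" using P_eq \<open>P \<le> 2 * C + 1\<close> by linarith
  define q where "q = p + 3 * k"
  have qs: "q \<le> 3 * s" unfolding q_def s_def by simp
  have ps: "p \<le> s" unfolding s_def by simp
  have "p * q \<le> s * (3 * s)" using mult_le_mono[OF ps qs] .
  then have pq: "p * q \<le> C" using C3 by simp
  have "1 * q \<le> p * q" using p2 by (intro mult_le_mono1) simp
  then have qn: "q \<le> n" using pq nC by linarith
  have "x * n \<le> (p - 1) * n" using xp by (intro mult_le_mono1) simp
  moreover have "(p - 1) * n + n = p * n" using p2 by (cases p) auto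
  ultimately have "x * n + C + p * q \<le> p * n" using pq nC by linarith
  moreover have "p * n - p * q = p * (n - q)" by (simp add: diff_mult_distrib2)
  ultimately show "x * n + C \<le> p * (n - (p + 3 * k))" unfolding q_def by linarith
  have "q + p \<le> 4 * s" using qs ps by simp
  also have "4 * s < 2 * C" using C3 s2 ss by linarith
  finally show "p + 3 * k + p < n" using nC q_def by simp
qed

lemma Gs_card:
  assumes "p + 3 * k \<le> n"
  shows "card (Gs n p k) = p * (n - (p + 3 * k))"
proof -
  let ?q = "p + 3 * k"
  have eq: "Gs n p k = (\<lambda>(a, f). {a, f}) ` ({..<p} \<times> {?q..<n})"
    unfolding Gs_def by fastforce
  have "inj_on (\<lambda>(a, f). {a, f}) ({..<p} \<times> {?q..<n})"
  proof (rule inj_onI, clarify)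
    fix a f a' f' assume h: "a < p" "f \<in> {?q..<n}" "a' < p" "f' \<in> {?q..<n}" "{a, f} = {a', f'}"
    then show "a = a' \<and> f = f'" by (auto simp: doubleton_eq_iff)
  qed
  then have "card (Gs n p k) = card ({..<p} \<times> {?q..<n})" unfolding eq by (rule card_image)
  also have "\<dots> = p * (n - ?q)" by (simp add: card_cartesian_product)
  finally show ?thesis .
qed

lemma graph_finite: "is_graph n G \<Longrightarrow> finite G"
  unfolding is_graph_def by (rule finite_subset[of _ "Pow {0..<n}"]) auto

theorem lemma3p1:
  fixes l t s n x :: nat
  assumes "t \<ge> l" and "s \<ge> l + 1" and "l + 1 \<ge> 3"
    and "n \<ge> 2 * ((3 * s) choose 2)"
    and "1 \<le> x" and "x \<le> l - 1"
  shows "ex_x n l t s (l - 1) \<ge> ex_x n l t s x"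
proof (cases "x = l - 1")
  case True
  then show ?thesis by simp
next
  case False
  define p where "p = l - 1"
  define k where "k = s - p"
  have lp: "l = p + 1" and sp: "s = p + k" and p2: "2 \<le> p" and k1: "1 \<le> k" and xp: "x + 1 \<le> p"
    using assms False unfolding p_def k_def by auto
  define C where "C = (3 * s) choose 2"
  have Ceq: "C = (3 * (p + k)) * (3 * (p + k) - 1) div 2" unfolding C_def sp by (rule choose_two)
  have nC: "2 * C \<le> n" using assms(4) unfolding C_def .
  note ar = arith_main[OF p2 k1 xp nC Ceq]
  let ?G0 = "G0 n p k"
  have gr0: "is_graph n ?G0" using G0_graph[of p k n] ar(2) by simp
  have G0in: "?G0 \<in> GG n l t s (l - 1)"
    unfolding GG_def using gr0 G0_noKlt[OF p2, of t n k] G0_nomatch[of p k n] G0_xG[OF p2 ar(2)]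
      assms(1) lp sp by simp
  have "card (Gs n p k) \<le> card ?G0"
    by (rule card_mono[OF graph_finite[OF gr0]]) (simp add: G0_def)
  then have cG0: "p * (n - (p + 3 * k)) \<le> card ?G0" using Gs_card[of p k n] ar(2) by simp
  have bound: "num_edges G \<le> num_edges ?G0" if "G \<in> GG n l t s x" for G
  proof -
    have G: "is_graph n G" "\<not> contains_matching (Suc s) G" "xG n s G = x"
      using that unfolding GG_def by auto
    have "card G \<le> x * n + C" using upper[OF G(1,2)] G(3) unfolding C_def by simp
    then show ?thesis unfolding num_edges_def using ar(1) cG0 by linarith
  qed
  have fin: "finite (GG n l t s (l - 1))"
    by (rule finite_subset[of _ "Pow (Pow {0..<n})"]) (auto simp: GG_def is_graph_def)
  have "num_edges ?G0 \<le> ex_x n l t s (l - 1)"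
    unfolding ex_x_def using G0in fin by (intro le_cSup_finite) auto
  moreover have "ex_x n l t s x \<le> num_edges ?G0"
  proof (cases "GG n l t s x = {}")
    case True then show ?thesis unfolding ex_x_def by simp
  next
    case False
    then show ?thesis unfolding ex_x_def using bound by (intro cSup_least) auto
  qed
  ultimately show ?thesis by linarith
qed

end
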